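(* Let $0<C<1$, $\epsilon=1/C-1$, $k=b/((1+\epsilon)\ln b)$, $b$ sufficiently large, and let $T$ be the complete tree with branching factor $b$, root $r$, leaves $L(T)$ and $n$ vertices; let $\Omega=\Omega(T)$ be its set of proper $k$-colorings. Let $S_c\subseteq\Omega$ be the colorings in which the root is frozen to color $c$, and $S=\bigcup_{1\le c\le k/2}S_c$. Then the conductance of $S$ for the heat-bath Glauber dynamics satisfies $\Phi_S\le\frac6n\sum_{z\in L(T)}\sum_{\sigma\in\Omega}\frac{\mathbf 1_{\sigma,z}}{|\Omega|}=\frac6n\sum_{z\in L(T)}\Pr_{\sigma\in\Omega}[\mathcal E(\sigma,z)]$, where $\sigma$ is uniform in $\Omega$.
   Context: A vertex $v$ is frozen in $\sigma$ if every proper coloring agreeing with $\sigma$ on the leaves of the subtree $T_v$ rooted at $v$ gives $v$ the color $\sigma(v)$. $\mathcal E(\sigma,z)$ (indicator $\mathbf 1_{\sigma,z}$) is the event that $\sigma$ is frozen at the root and there exists a color $c$ such that the coloring $\sigma^{z\to c}$, obtained by recoloring the leaf $z$ to $c$, is not frozen at the root. The heat-bath Glauber dynamics chooses a uniform vertex and recolors it uniformly among colors not used by its neighbors; $\pi$ is uniform on $\Omega$. The conductance of $S$ is $\Phi_S=\frac{\sum_{\sigma\in S}\sum_{\eta\notin S}\pi(\sigma)P(\sigma,\eta)}{\pi(S)\pi(\bar S)}$. *)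

theory Defs
  imports Complex_Main "HOL-Library.FuncSet"
begin

text \<open>Complete b-ary tree of height h: vertices are words over {0..<b} of length at most h;
  the root is the empty word; the children of v are v @ [i] for i < b; the leaves are the
  words of length exactly h.\<close>

definition tree_vertices :: "nat \<Rightarrow> nat \<Rightarrow> nat list set" where
  "tree_vertices b h = {xs. length xs \<le> h \<and> set xs \<subseteq> {0..<b}}"

definition tree_leaves :: "nat \<Rightarrow> nat \<Rightarrow> nat list set" where
  "tree_leaves b h = {xs \<in> tree_vertices b h. length xs = h}"

definition tree_root :: "nat list" where
  "tree_root = []"

definition tree_nbrs :: "nat \<Rightarrow> nat \<Rightarrow> nat list \<Rightarrow> nat list set" where
  "tree_nbrs b h v =
     (if v = [] then {} else {butlast v}) \<union>
     (if length v < h then {v @ [i] | i. i < b} else {})"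

definition proper_colorings :: "nat \<Rightarrow> nat \<Rightarrow> nat \<Rightarrow> (nat list \<Rightarrow> nat) set" where
  "proper_colorings b h k =
     {\<sigma> \<in> tree_vertices b h \<rightarrow>\<^sub>E {1..k}.
        \<forall>v \<in> tree_vertices b h. \<forall>u \<in> tree_nbrs b h v. \<sigma> u \<noteq> \<sigma> v}"

definition frozen_root :: "nat \<Rightarrow> nat \<Rightarrow> nat \<Rightarrow> (nat list \<Rightarrow> nat) \<Rightarrow> bool" where
  "frozen_root b h k \<sigma> =
     (\<forall>\<tau> \<in> proper_colorings b h k.
        (\<forall>z \<in> tree_leaves b h. \<tau> z = \<sigma> z) \<longrightarrow> \<tau> tree_root = \<sigma> tree_root)"

definition event_E :: "nat \<Rightarrow> nat \<Rightarrow> nat \<Rightarrow> (nat list \<Rightarrow> nat) \<Rightarrow> nat list \<Rightarrow> bool" where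
  "event_E b h k \<sigma> z =
     (frozen_root b h k \<sigma> \<and>
      (\<exists>c \<in> {1..k}. \<sigma>(z := c) \<in> proper_colorings b h k \<and>
                    \<not> frozen_root b h k (\<sigma>(z := c))))"

definition avail_colors :: "nat \<Rightarrow> nat \<Rightarrow> nat \<Rightarrow> (nat list \<Rightarrow> nat) \<Rightarrow> nat list \<Rightarrow> nat set" where
  "avail_colors b h k \<sigma> v = {c \<in> {1..k}. \<forall>u \<in> tree_nbrs b h v. \<sigma> u \<noteq> c}"

definition glauber_P :: "nat \<Rightarrow> nat \<Rightarrow> nat \<Rightarrow> (nat list \<Rightarrow> nat) \<Rightarrow> (nat list \<Rightarrow> nat) \<Rightarrow> real" where
  "glauber_P b h k \<sigma> \<eta> =
     (1 / real (card (tree_vertices b h))) *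
     (\<Sum>v \<in> tree_vertices b h.
        \<Sum>c \<in> avail_colors b h k \<sigma> v.
          (if \<eta> = \<sigma>(v := c) then 1 / real (card (avail_colors b h k \<sigma> v)) else 0))"

definition unif_pi :: "nat \<Rightarrow> nat \<Rightarrow> nat \<Rightarrow> (nat list \<Rightarrow> nat) set \<Rightarrow> real" where
  "unif_pi b h k A = real (card (A \<inter> proper_colorings b h k)) / real (card (proper_colorings b h k))"

definition conductance :: "nat \<Rightarrow> nat \<Rightarrow> nat \<Rightarrow> (nat list \<Rightarrow> nat) set \<Rightarrow> real" where
  "conductance b h k S =
     (\<Sum>\<sigma> \<in> S. \<Sum>\<eta> \<in> proper_colorings b h k - S.
        unif_pi b h k {\<sigma>} * glauber_P b h k \<sigma> \<eta>)
     / (unif_pi b h k S * unif_pi b h k (proper_colorings b h k - S))"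

end

theory Submission
  imports Defs
begin


lemma pow_le_exp:
  fixes t :: real assumes "0 \<le> t" "t \<le> 1"
  shows "(1 - t) ^ n \<le> exp (- t * real n)"
proof -
  have "(1 - t) ^ n \<le> exp (- t) ^ n"
    by (rule power_mono) (use exp_ge_add_one_self[of "-t"] assms in auto)
  also have "\<dots> = exp (- t * real n)" by (rule exp_of_nat2_mult[symmetric])
  finally show ?thesis .
qed

lemma pointwise:
  fixes C q0 K :: real and b :: nat
  assumes C: "0 < C" "C < 1" and q0: "q0 = (3 + C) / 4"
    and x3: "3 \<le> real b" and K9: "9 \<le> K" and KC: "K \<le> C * real b / ln (real b)"
    and P: "real b powr (1 - q0 / C) \<le> 1 - q0"
  shows "(K - 1) * (1 - q0 / (K - 1)) ^ b \<le> 1 - q0"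
proof -
  define x where "x = real b"
  have x3': "3 \<le> x" using x3 x_def by simp
  have lnx: "1 \<le> ln x"
  proof -
    have "exp 1 \<le> (3::real)" using exp_le by simp
    also have "\<dots> \<le> x" by (rule x3')
    finally show ?thesis using x3' by (simp add: ln_ge_iff)
  qed
  have q0pos: "0 < q0" "q0 < 1" using q0 C by auto
  have t1: "0 \<le> q0 / (K - 1)" "q0 / (K - 1) \<le> 1" using q0pos K9 by auto
  have A: "(1 - q0 / (K - 1)) ^ b \<le> exp (- (q0 / (K - 1)) * x)"
    using pow_le_exp[OF t1] x_def by simp
  have B: "exp (- (q0 / (K - 1)) * x) \<le> exp (- (q0 / K) * x)"
  proof -
    have "q0 / K \<le> q0 / (K - 1)" using q0pos K9 by (intro divide_left_mono) auto
    then have "q0 / K * x \<le> q0 / (K - 1) * x" using x3' by (intro mult_right_mono) auto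
    then show ?thesis by (intro exp_mono) (simp only: mult_minus_left neg_le_iff_le)
  qed
  have KC': "K * ln x \<le> C * x" using KC lnx x_def by (simp add: pos_le_divide_eq)
  have Cx: "ln x / C \<le> x / K" using KC' K9 C by (simp add: field_simps)
  have D: "exp (- (q0 / K) * x) \<le> exp (- (q0 / C) * ln x)"
  proof -
    have "q0 * (ln x / C) \<le> q0 * (x / K)" using Cx q0pos by (intro mult_left_mono) auto
    then show ?thesis by (intro exp_mono) (simp add: field_simps)
  qed
  have E: "exp (- (q0 / C) * ln x) = x powr (- (q0 / C))"
    using x3' by (simp add: powr_def)
  have Kx: "K - 1 \<le> x"
  proof -
    have "C * x / ln x \<le> x" using C lnx x3' by (simp add: divide_le_eq)
    then show ?thesis using KC unfolding x_def by linarith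
  qed
  have "(K - 1) * (1 - q0 / (K - 1)) ^ b \<le> x * x powr (- (q0 / C))"
  proof (rule mult_mono)
    show "(1 - q0 / (K - 1)) ^ b \<le> x powr - (q0 / C)" using A B D E by linarith
  qed (use Kx x3' t1 in auto)
  also have "x * x powr (- (q0 / C)) = x powr (1 - q0 / C)"
  proof -
    have "x powr (1 - q0 / C) = x powr 1 * x powr (- (q0 / C))"
      using powr_add[of x 1 "- (q0 / C)"] by simp
    then show ?thesis using x3' by simp
  qed
  finally show ?thesis using P x_def by simp
qed

lemma analytic:
  fixes C :: real assumes C: "0 < C" "C < 1"
  shows "\<exists>b0::nat. \<forall>b\<ge>b0. 3 \<le> real b \<and> 10 \<le> C * real b / ln (real b)
     \<and> real b powr (1 - ((3 + C) / 4) / C) \<le> 1 - (3 + C) / 4"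
proof -
  define q0 where "q0 = (3 + C) / 4"
  have neg: "1 - q0 / C < 0" using C by (simp add: q0_def field_simps)
  have e1: "eventually (\<lambda>b::nat. 3 \<le> real b) sequentially"
    by (rule eventually_sequentiallyI[of 3]) simp
  have "((\<lambda>b::nat. real b powr (1 - q0 / C)) \<longlongrightarrow> 0) sequentially"
    by (rule tendsto_neg_powr[OF neg filterlim_real_sequentially])
  hence e3: "eventually (\<lambda>b::nat. real b powr (1 - q0 / C) < 1 - q0) sequentially"
    by (rule order_tendstoD) (simp add: q0_def C)
  have "((\<lambda>b::nat. ln (real b) / real b) \<longlongrightarrow> 0) sequentially"
    using filterlim_compose[OF ln_x_over_x_tendsto_0 filterlim_real_sequentially] by simp
  hence e2: "eventually (\<lambda>b::nat. ln (real b) / real b < C / 10) sequentially"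
    by (rule order_tendstoD) (simp add: C)
  have "eventually (\<lambda>b::nat. 3 \<le> real b \<and> 10 \<le> C * real b / ln (real b)
     \<and> real b powr (1 - q0 / C) \<le> 1 - q0) sequentially"
    using e1 e2 e3
  proof eventually_elim
    case (elim b)
    have lnp: "0 < ln (real b)" using elim by simp
    have "10 * ln (real b) \<le> C * real b" using elim(2) elim(1) by (simp add: field_simps)
    then have "10 \<le> C * real b / ln (real b)" using lnp by (simp add: le_divide_eq)
    then show ?case using elim by simp
  qed
  then show ?thesis unfolding q0_def eventually_sequentially by blast
qed


lemma V0: "tree_vertices b 0 = {[]}" by (auto simp: tree_vertices_def)
lemma L0: "tree_leaves b 0 = {[]}" by (auto simp: tree_leaves_def tree_vertices_def)
lemma Nil_V[simp]: "[] \<in> tree_vertices b h" by (simp add: tree_vertices_def)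
lemma Cons_V[simp]: "(i # xs \<in> tree_vertices b (Suc h)) = (i < b \<and> xs \<in> tree_vertices b h)"
  by (auto simp: tree_vertices_def)
lemma Cons_V0[simp]: "i # xs \<notin> tree_vertices b 0" by (simp add: tree_vertices_def)
lemma Cons_L[simp]: "(i # xs \<in> tree_leaves b (Suc h)) = (i < b \<and> xs \<in> tree_leaves b h)"
  by (auto simp: tree_leaves_def)
lemma Nil_L[simp]: "[] \<notin> tree_leaves b (Suc h)" by (simp add: tree_leaves_def)
lemma L_V: "tree_leaves b h \<subseteq> tree_vertices b h" by (auto simp: tree_leaves_def)
lemma finite_V: "finite (tree_vertices b h)"
proof -
  have "tree_vertices b h = {xs. set xs \<subseteq> {0..<b} \<and> length xs \<le> h}"
    by (auto simp: tree_vertices_def)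
  then show ?thesis using finite_lists_length_le[of "{0..<b}" h] by simp
qed

lemma nbrs_V: "v \<in> tree_vertices b h \<Longrightarrow> tree_nbrs b h v \<subseteq> tree_vertices b h"
  by (auto simp: tree_nbrs_def tree_vertices_def dest: in_set_butlastD)

lemma nbrs_Cons: "tree_nbrs b (Suc h) (i # xs) =
   (if xs = [] then {[]} else {}) \<union> (#) i ` tree_nbrs b h xs"
  by (auto simp: tree_nbrs_def)

lemma nbrs_Nil: "tree_nbrs b (Suc h) [] = {[j] | j. j < b}"
  by (auto simp: tree_nbrs_def)

definition sub :: "nat \<Rightarrow> nat \<Rightarrow> (nat list \<Rightarrow> nat) \<Rightarrow> nat \<Rightarrow> nat list \<Rightarrow> nat" where
  "sub b h \<sigma> i = restrict (\<lambda>xs. \<sigma> (i # xs)) (tree_vertices b h)"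

definition glue :: "nat \<Rightarrow> nat \<Rightarrow> nat \<Rightarrow> (nat \<Rightarrow> nat list \<Rightarrow> nat) \<Rightarrow> nat list \<Rightarrow> nat" where
  "glue b h a f = (\<lambda>v. if v \<in> tree_vertices b (Suc h)
      then (case v of [] \<Rightarrow> a | i # xs \<Rightarrow> f i xs) else undefined)"

lemma proper_sub:
  assumes "\<sigma> \<in> proper_colorings b (Suc h) k" "i < b"
  shows "sub b h \<sigma> i \<in> proper_colorings b h k" "sub b h \<sigma> i [] \<noteq> \<sigma> []"
proof -
  have PE: "\<sigma> \<in> tree_vertices b (Suc h) \<rightarrow>\<^sub>E {1..k}" and
    pr: "\<And>v u. v \<in> tree_vertices b (Suc h) \<Longrightarrow> u \<in> tree_nbrs b (Suc h) v \<Longrightarrow> \<sigma> u \<noteq> \<sigma> v"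
    using assms(1) by (auto simp: proper_colorings_def)
  show "sub b h \<sigma> i \<in> proper_colorings b h k"
    unfolding proper_colorings_def
  proof (intro CollectI conjI ballI)
    show "sub b h \<sigma> i \<in> tree_vertices b h \<rightarrow>\<^sub>E {1..k}"
      using PE assms(2) by (auto simp: sub_def)
  next
    fix v u assume v: "v \<in> tree_vertices b h" and u: "u \<in> tree_nbrs b h v"
    have uV: "u \<in> tree_vertices b h" using nbrs_V[OF v] u by auto
    have "i # u \<in> tree_nbrs b (Suc h) (i # v)" using u by (simp add: nbrs_Cons)
    then have "\<sigma> (i # u) \<noteq> \<sigma> (i # v)" using pr v assms(2) by simp
    then show "sub b h \<sigma> i u \<noteq> sub b h \<sigma> i v" using v uV by (simp add: sub_def)
  qed
  have "[i] \<in> tree_nbrs b (Suc h) []" using assms(2) by (simp add: nbrs_Nil)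
  then have "\<sigma> [i] \<noteq> \<sigma> []" using pr[of "[]"] by simp
  then show "sub b h \<sigma> i [] \<noteq> \<sigma> []" by (simp add: sub_def)
qed

lemma glue_proper:
  assumes a: "a \<in> {1..k}" and f: "\<And>i. i < b \<Longrightarrow> f i \<in> proper_colorings b h k \<and> f i [] \<noteq> a"
  shows "glue b h a f \<in> proper_colorings b (Suc h) k"
  unfolding proper_colorings_def
proof (intro CollectI conjI ballI)
  show "glue b h a f \<in> tree_vertices b (Suc h) \<rightarrow>\<^sub>E {1..k}"
  proof (rule PiE_I)
    fix v assume v: "v \<in> tree_vertices b (Suc h)"
    show "glue b h a f v \<in> {1..k}"
    proof (cases v)
      case Nil then show ?thesis using a by (simp add: glue_def)
    next
      case (Cons i xs)
      then have "i < b" "xs \<in> tree_vertices b h" using v by auto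
      then show ?thesis using f[of i] Cons by (auto simp: glue_def proper_colorings_def)
    qed
  qed (simp add: glue_def)
next
  fix v u assume v: "v \<in> tree_vertices b (Suc h)" and u: "u \<in> tree_nbrs b (Suc h) v"
  have uV: "u \<in> tree_vertices b (Suc h)" using nbrs_V[OF v] u by auto
  show "glue b h a f u \<noteq> glue b h a f v"
  proof (cases v)
    case Nil
    then obtain j where j: "u = [j]" "j < b" using u by (auto simp: nbrs_Nil)
    then show ?thesis using f[of j] Nil uV by (auto simp: glue_def)
  next
    case (Cons i xs)
    have i: "i < b" "xs \<in> tree_vertices b h" using v Cons by auto
    show ?thesis
    proof (cases "u = []")
      case True
      then have "xs = []" using u Cons by (auto simp: nbrs_Cons split: if_splits)
      then show ?thesis using f[of i] True Cons v by (auto simp: glue_def)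
    next
      case False
      then obtain u' where u': "u = i # u'" "u' \<in> tree_nbrs b h xs" using u Cons
        by (auto simp: nbrs_Cons split: if_splits)
      have "f i u' \<noteq> f i xs" using f[OF i(1)] i(2) u'(2) by (auto simp: proper_colorings_def)
      then show ?thesis using u' Cons v uV by (simp add: glue_def)
    qed
  qed
qed

lemma glue_Nil[simp]: "glue b h a f [] = a" by (simp add: glue_def)

lemma sub_glue:
  assumes "f i \<in> extensional (tree_vertices b h)" "i < b"
  shows "sub b h (glue b h a f) i = f i"
  using assms by (auto simp: sub_def glue_def extensional_def)

lemma sub_inj:
  assumes "\<sigma> \<in> extensional (tree_vertices b (Suc h))" "\<tau> \<in> extensional (tree_vertices b (Suc h))"
    "\<sigma> [] = \<tau> []" "\<And>i. i < b \<Longrightarrow> sub b h \<sigma> i = sub b h \<tau> i"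
  shows "\<sigma> = \<tau>"
proof
  fix v show "\<sigma> v = \<tau> v"
  proof (cases "v \<in> tree_vertices b (Suc h)")
    case False then show ?thesis using assms(1,2) by (simp add: extensional_def)
  next
    case True
    show ?thesis
    proof (cases v)
      case Nil then show ?thesis using assms(3) by simp
    next
      case (Cons i xs)
      then have "i < b" "xs \<in> tree_vertices b h" using True by auto
      then show ?thesis using assms(4)[of i] Cons
        by (auto simp: sub_def restrict_def fun_eq_iff split: if_splits dest: spec[of _ xs])
    qed
  qed
qed

lemma frozen0: "frozen_root b 0 k \<sigma>"
  by (simp add: frozen_root_def L0 tree_root_def)

lemma frozen_Suc:
  assumes \<sigma>: "\<sigma> \<in> proper_colorings b (Suc h) k"
    and H: "\<And>c. c \<in> {1..k} \<Longrightarrow> c \<noteq> \<sigma> [] \<Longrightarrow>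
             \<exists>i<b. frozen_root b h k (sub b h \<sigma> i) \<and> sub b h \<sigma> i [] = c"
  shows "frozen_root b (Suc h) k \<sigma>"
  unfolding frozen_root_def tree_root_def
proof (intro ballI impI)
  fix \<tau> assume \<tau>: "\<tau> \<in> proper_colorings b (Suc h) k"
    and ag: "\<forall>z\<in>tree_leaves b (Suc h). \<tau> z = \<sigma> z"
  show "\<tau> [] = \<sigma> []"
  proof (rule ccontr)
    assume ne: "\<tau> [] \<noteq> \<sigma> []"
    have "\<tau> [] \<in> {1..k}" using \<tau> by (auto simp: proper_colorings_def)
    then obtain i where i: "i < b" "frozen_root b h k (sub b h \<sigma> i)" "sub b h \<sigma> i [] = \<tau> []"
      using H ne by metis
    have t1: "sub b h \<tau> i \<in> proper_colorings b h k" "sub b h \<tau> i [] \<noteq> \<tau> []"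
      using proper_sub[OF \<tau> i(1)] by auto
    have "\<forall>z\<in>tree_leaves b h. sub b h \<tau> i z = sub b h \<sigma> i z"
      using ag i(1) L_V by (auto simp: sub_def)
    then have "sub b h \<tau> i [] = sub b h \<sigma> i []"
      using i(2) t1(1) unfolding frozen_root_def tree_root_def by blast
    then show False using t1(2) i(3) by simp
  qed
qed



definition sw :: "nat \<Rightarrow> nat \<Rightarrow> nat \<Rightarrow> nat" where
  "sw a c x = (if x = a then c else if x = c then a else x)"

definition cperm :: "nat \<Rightarrow> nat \<Rightarrow> nat \<Rightarrow> nat \<Rightarrow> (nat list \<Rightarrow> nat) \<Rightarrow> nat list \<Rightarrow> nat" where
  "cperm b h a c \<tau> = restrict (\<lambda>v. sw a c (\<tau> v)) (tree_vertices b h)"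

lemma sw_sw[simp]: "sw a c (sw a c x) = x" by (simp add: sw_def)
lemma sw_inj: "(sw a c x = sw a c y) = (x = y)" by (auto simp: sw_def)
lemma sw_comm: "sw a c = sw c a" by (auto simp: sw_def fun_eq_iff)

lemma finite_Omega: "finite (proper_colorings b h k)"
proof -
  have "proper_colorings b h k \<subseteq> tree_vertices b h \<rightarrow>\<^sub>E {1..k}"
    by (auto simp: proper_colorings_def)
  moreover have "finite (tree_vertices b h \<rightarrow>\<^sub>E {1..k})" by (intro finite_PiE finite_V) auto
  ultimately show ?thesis by (rule finite_subset)
qed

lemma cperm_proper:
  assumes "\<tau> \<in> proper_colorings b h k" "a \<in> {1..k}" "c \<in> {1..k}"
  shows "cperm b h a c \<tau> \<in> proper_colorings b h k"
proof -
  have PE: "\<tau> \<in> tree_vertices b h \<rightarrow>\<^sub>E {1..k}" and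
    pr: "\<And>v u. v \<in> tree_vertices b h \<Longrightarrow> u \<in> tree_nbrs b h v \<Longrightarrow> \<tau> u \<noteq> \<tau> v"
    using assms(1) by (auto simp: proper_colorings_def)
  have sw_in: "\<And>x. x \<in> {1..k} \<Longrightarrow> sw a c x \<in> {1..k}" using assms(2,3) by (simp add: sw_def)
  show ?thesis unfolding proper_colorings_def
  proof (intro CollectI conjI ballI)
    show "cperm b h a c \<tau> \<in> tree_vertices b h \<rightarrow>\<^sub>E {1..k}"
      unfolding cperm_def using PE sw_in by (simp add: PiE_iff)
  next
    fix v u assume v: "v \<in> tree_vertices b h" and u: "u \<in> tree_nbrs b h v"
    have uV: "u \<in> tree_vertices b h" using nbrs_V[OF v] u by auto
    show "cperm b h a c \<tau> u \<noteq> cperm b h a c \<tau> v"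
      using pr[OF v u] v uV by (simp add: cperm_def sw_inj)
  qed
qed

lemma cperm_cperm:
  assumes "\<tau> \<in> proper_colorings b h k"
  shows "cperm b h a c (cperm b h a c \<tau>) = \<tau>"
  using assms unfolding proper_colorings_def cperm_def
  by (auto simp: fun_eq_iff PiE_iff extensional_def)

lemma cperm_root[simp]: "cperm b h a c \<tau> [] = sw a c (\<tau> [])"
  by (simp add: cperm_def)

lemma cperm_frozen:
  assumes \<tau>: "\<tau> \<in> proper_colorings b h k" and a: "a \<in> {1..k}" "c \<in> {1..k}"
    and fr: "frozen_root b h k \<tau>"
  shows "frozen_root b h k (cperm b h a c \<tau>)"
  unfolding frozen_root_def tree_root_def
proof (intro ballI impI)
  fix \<rho> assume \<rho>: "\<rho> \<in> proper_colorings b h k"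
    and ag: "\<forall>z\<in>tree_leaves b h. \<rho> z = cperm b h a c \<tau> z"
  have "cperm b h a c \<rho> \<in> proper_colorings b h k" using cperm_proper[OF \<rho> a] .
  moreover have "\<forall>z\<in>tree_leaves b h. cperm b h a c \<rho> z = \<tau> z"
    using ag L_V by (auto simp: cperm_def)
  ultimately have "cperm b h a c \<rho> [] = \<tau> []"
    using fr unfolding frozen_root_def tree_root_def by blast
  then have "sw a c (\<rho> []) = \<tau> []" by simp
  then have "sw a c (sw a c (\<rho> [])) = sw a c (\<tau> [])" by (rule arg_cong)
  then show "\<rho> [] = cperm b h a c \<tau> []" by (simp only: sw_sw cperm_root)
qed

lemma sym_card_le:
  assumes P: "\<And>\<tau> a c. \<tau> \<in> proper_colorings b h k \<Longrightarrow> a \<in> {1..k} \<Longrightarrow> c \<in> {1..k} \<Longrightarrow> P \<tau> \<Longrightarrow>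
      P (cperm b h a c \<tau>)"
    and a: "a \<in> {1..k}" "c \<in> {1..k}"
  shows "card {\<tau> \<in> proper_colorings b h k. P \<tau> \<and> \<tau> [] = a} \<le>
         card {\<tau> \<in> proper_colorings b h k. P \<tau> \<and> \<tau> [] = c}"
proof (rule card_inj_on_le[where f = "cperm b h a c"])
  show "inj_on (cperm b h a c) {\<tau> \<in> proper_colorings b h k. P \<tau> \<and> \<tau> [] = a}"
    by (rule inj_on_inverseI[where g = "cperm b h a c"]) (auto simp: cperm_cperm)
  show "cperm b h a c ` {\<tau> \<in> proper_colorings b h k. P \<tau> \<and> \<tau> [] = a}
     \<subseteq> {\<tau> \<in> proper_colorings b h k. P \<tau> \<and> \<tau> [] = c}"
    using cperm_proper P a by (auto simp: sw_def)
  show "finite {\<tau> \<in> proper_colorings b h k. P \<tau> \<and> \<tau> [] = c}"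
    using finite_Omega by simp
qed

lemma sym_card:
  assumes P: "\<And>\<tau> a c. \<tau> \<in> proper_colorings b h k \<Longrightarrow> a \<in> {1..k} \<Longrightarrow> c \<in> {1..k} \<Longrightarrow> P \<tau> \<Longrightarrow>
      P (cperm b h a c \<tau>)"
    and a: "a \<in> {1..k}" "c \<in> {1..k}"
  shows "card {\<tau> \<in> proper_colorings b h k. P \<tau> \<and> \<tau> [] = a} =
         card {\<tau> \<in> proper_colorings b h k. P \<tau> \<and> \<tau> [] = c}"
  by (rule le_antisym[OF sym_card_le[of b h k P, OF P a] sym_card_le[of b h k P, OF P a(2,1)]])

lemma sym_card_all:
  assumes "a \<in> {1..k}" "c \<in> {1..k}"
  shows "card {\<tau> \<in> proper_colorings b h k. \<tau> [] = a} =
         card {\<tau> \<in> proper_colorings b h k. \<tau> [] = c}"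
  using sym_card[of b h k "\<lambda>_. True", OF _ assms] by simp

lemma sym_card_frozen:
  assumes "a \<in> {1..k}" "c \<in> {1..k}"
  shows "card {\<tau> \<in> proper_colorings b h k. frozen_root b h k \<tau> \<and> \<tau> [] = a} =
         card {\<tau> \<in> proper_colorings b h k. frozen_root b h k \<tau> \<and> \<tau> [] = c}"
  using sym_card[of b h k "frozen_root b h k", OF cperm_frozen assms] by blast

lemma root_range: "\<tau> \<in> proper_colorings b h k \<Longrightarrow> \<tau> [] \<in> {1..k}"
  unfolding proper_colorings_def by (metis (no_types, lifting) Nil_V PiE_mem mem_Collect_eq)

lemma card_by_root:
  "card {\<tau> \<in> proper_colorings b h k. P \<tau>} =
   (\<Sum>a\<in>{1..k}. card {\<tau> \<in> proper_colorings b h k. P \<tau> \<and> \<tau> [] = a})"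
proof -
  have eq1: "{\<tau> \<in> proper_colorings b h k. P \<tau>} =
        (\<Union>a\<in>{1..k}. {\<tau> \<in> proper_colorings b h k. P \<tau> \<and> \<tau> [] = a})"
  proof (rule set_eqI, rule iffI)
    fix x assume "x \<in> {\<tau> \<in> proper_colorings b h k. P \<tau>}"
    then show "x \<in> (\<Union>a\<in>{1..k}. {\<tau> \<in> proper_colorings b h k. P \<tau> \<and> \<tau> [] = a})"
      using root_range[of x b h k] by auto
  qed auto
  have eq2: "card (\<Union>a\<in>{1..k}. {\<tau> \<in> proper_colorings b h k. P \<tau> \<and> \<tau> [] = a}) =
    (\<Sum>a\<in>{1..k}. card {\<tau> \<in> proper_colorings b h k. P \<tau> \<and> \<tau> [] = a})"
    apply (rule card_UN_disjoint)
    apply simp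
    apply (simp add: finite_Omega)
    apply blast
    done
  show ?thesis unfolding eq1 by (rule eq2)
qed



lemma card_all_by_root:
  "card (proper_colorings b h k) = (\<Sum>a\<in>{1..k}. card {\<tau> \<in> proper_colorings b h k. \<tau> [] = a})"
  using card_by_root[of b h k "\<lambda>_. True"] by simp

lemma card_all_eq:
  assumes "a \<in> {1..k}"
  shows "card (proper_colorings b h k) = k * card {\<tau> \<in> proper_colorings b h k. \<tau> [] = a}"
proof -
  have "(\<Sum>c\<in>{1..k}. card {\<tau> \<in> proper_colorings b h k. \<tau> [] = c})
      = (\<Sum>c\<in>{1..k}. card {\<tau> \<in> proper_colorings b h k. \<tau> [] = a})"
    by (rule sum.cong) (use sym_card_all[OF _ assms] in auto)
  then show ?thesis using card_all_by_root[of b h k] by simp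
qed

lemma card_frozen_eq:
  assumes "a \<in> {1..k}"
  shows "card {\<tau> \<in> proper_colorings b h k. frozen_root b h k \<tau>}
       = k * card {\<tau> \<in> proper_colorings b h k. frozen_root b h k \<tau> \<and> \<tau> [] = a}"
proof -
  have "(\<Sum>c\<in>{1..k}. card {\<tau> \<in> proper_colorings b h k. frozen_root b h k \<tau> \<and> \<tau> [] = c})
      = (\<Sum>c\<in>{1..k}. card {\<tau> \<in> proper_colorings b h k. frozen_root b h k \<tau> \<and> \<tau> [] = a})"
    by (rule sum.cong) (use sym_card_frozen[OF _ assms] in auto)
  then show ?thesis using card_by_root[of b h k "frozen_root b h k"] by simp
qed

lemma count_step:
  fixes q0 :: real
  assumes a: "a \<in> {1..k}" and k2: "2 \<le> k" and q0: "0 \<le> q0" "q0 \<le> 1"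
    and hyp: "q0 * real (card (proper_colorings b h k))
              \<le> real (card {\<tau> \<in> proper_colorings b h k. frozen_root b h k \<tau>})"
    and an: "(real k - 1) * (1 - q0 / (real k - 1)) ^ b \<le> 1 - q0"
  shows "real (card {\<sigma> \<in> proper_colorings b (Suc h) k. \<not> frozen_root b (Suc h) k \<sigma> \<and> \<sigma> [] = a})
       \<le> (1 - q0) * real (card {\<sigma> \<in> proper_colorings b (Suc h) k. \<sigma> [] = a})"
proof -
  define Om where "Om = proper_colorings b h k"
  define Aa where "Aa = {\<tau> \<in> Om. \<tau> [] = a}"
  define D where "D = {\<tau> \<in> Om. \<tau> [] \<noteq> a}"
  define Fc where "Fc = (\<lambda>c. {\<tau> \<in> Om. frozen_root b h k \<tau> \<and> \<tau> [] = c})"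
  define R where "R = card Aa"
  define G where "G = card (Fc a)"
  have finOm: "finite Om" unfolding Om_def by (rule finite_Omega)
  have N: "card Om = k * R" unfolding Om_def R_def Aa_def by (rule card_all_eq[OF a])
  have F: "card {\<tau> \<in> Om. frozen_root b h k \<tau>} = k * G"
    unfolding Om_def G_def Fc_def by (rule card_frozen_eq[OF a])
  have DA: "card D + R = card Om"
  proof -
    have "Om = D \<union> Aa" "D \<inter> Aa = {}" unfolding D_def Aa_def by auto
    then show ?thesis unfolding R_def using finOm
      by (metis card_Un_disjoint finite_Un)
  qed
  define M where "M = real (card D)"
  have M: "M = (real k - 1) * real R"
  proof -
    have "real (card D) + real R = real k * real R" using DA N by (metis of_nat_add of_nat_mult)
    then show ?thesis unfolding M_def by (simp add: algebra_simps)
  qed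
  have kpos: "0 < real k" using k2 by simp
  have GR: "q0 * real R \<le> real G"
  proof -
    have "q0 * (real k * real R) \<le> real k * real G"
      using hyp N F unfolding Om_def by (metis of_nat_mult)
    then have "real k * (q0 * real R) \<le> real k * real G" by (simp add: algebra_simps)
    then show ?thesis using kpos by simp
  qed
  have FcG: "card (Fc c) = G" if "c \<in> {1..k}" for c
    unfolding Fc_def G_def Om_def by (rule sym_card_frozen[OF that a])
  have cardDF: "c \<in> {1..k} \<Longrightarrow> c \<noteq> a \<Longrightarrow> real (card (D - Fc c)) \<le> M - q0 * real R" for c
  proof -
    assume c: "c \<in> {1..k}" "c \<noteq> a"
    have sub: "Fc c \<subseteq> D" unfolding Fc_def D_def using c by auto
    have "finite (Fc c)" unfolding Fc_def using finOm by simp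
    then have "card (D - Fc c) = card D - card (Fc c)" using sub by (rule card_Diff_subset)
    moreover have "card (Fc c) \<le> card D" using sub finOm unfolding D_def by (intro card_mono) auto
    ultimately have "real (card (D - Fc c)) = M - real G" unfolding M_def using FcG[OF c(1)] by simp
    then show ?thesis using GR by simp
  qed
  have MqR: "0 \<le> M - q0 * real R"
  proof -
    have "q0 * real R \<le> (real k - 1) * real R" using q0 k2 by (intro mult_right_mono) auto
    then show ?thesis using M by simp
  qed
  define Aa' where "Aa' = {\<sigma> \<in> proper_colorings b (Suc h) k. \<sigma> [] = a}"
  have low: "card (PiE {0..<b} (\<lambda>_. D)) \<le> card Aa'"
  proof (rule card_inj_on_le[where f = "glue b h a"])
    show "inj_on (glue b h a) (PiE {0..<b} (\<lambda>_. D))"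
    proof (rule inj_onI)
      fix f g assume f: "f \<in> PiE {0..<b} (\<lambda>_. D)" and g: "g \<in> PiE {0..<b} (\<lambda>_. D)"
        and eq: "glue b h a f = glue b h a g"
      show "f = g"
      proof
        fix i show "f i = g i"
        proof (cases "i < b")
          case True
          have "f i \<in> extensional (tree_vertices b h)" "g i \<in> extensional (tree_vertices b h)"
            using f g True unfolding D_def Om_def proper_colorings_def by (auto simp: PiE_iff)
          then show ?thesis using sub_glue[of f i b h a] sub_glue[of g i b h a] eq True by metis
        next
          case False then show ?thesis using f g by (auto simp: PiE_iff extensional_def)
        qed
      qed
    qed
    show "glue b h a ` (PiE {0..<b} (\<lambda>_. D)) \<subseteq> Aa'"
    proof
      fix s assume "s \<in> glue b h a ` (PiE {0..<b} (\<lambda>_. D))"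
      then obtain f where f: "f \<in> PiE {0..<b} (\<lambda>_. D)" and s: "s = glue b h a f" by auto
      have "glue b h a f \<in> proper_colorings b (Suc h) k"
        by (rule glue_proper[OF a]) (use f in \<open>auto simp: D_def Om_def PiE_iff\<close>)
      then show "s \<in> Aa'" unfolding Aa'_def s by simp
    qed
    show "finite Aa'" unfolding Aa'_def using finite_Omega by simp
  qed
  have cardPi: "card (PiE {0..<b} (\<lambda>_. D)) = card D ^ b" by (simp add: card_PiE)
  define NF where "NF = {\<sigma> \<in> proper_colorings b (Suc h) k. \<not> frozen_root b (Suc h) k \<sigma> \<and> \<sigma> [] = a}"
  define Psi where "Psi = (\<lambda>\<sigma>. \<lambda>i\<in>{0..<b}. sub b h \<sigma> i)"
  define U where "U = (\<Union>c\<in>{1..k} - {a}. PiE {0..<b} (\<lambda>_. D - Fc c))"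
  have up1: "card NF \<le> card U"
  proof (rule card_inj_on_le[where f = Psi])
    show "inj_on Psi NF"
    proof (rule inj_onI)
      fix s t assume s: "s \<in> NF" and t: "t \<in> NF" and eq: "Psi s = Psi t"
      show "s = t"
      proof (rule sub_inj[of s b h t])
        show "s \<in> extensional (tree_vertices b (Suc h))" "t \<in> extensional (tree_vertices b (Suc h))"
          using s t unfolding NF_def proper_colorings_def by (auto simp: PiE_iff)
        show "s [] = t []" using s t unfolding NF_def by simp
        fix i assume "i < b"
        then show "sub b h s i = sub b h t i" using eq unfolding Psi_def by (metis atLeastLessThan_iff le0 restrict_apply')
      qed
    qed
    show "Psi ` NF \<subseteq> U"
    proof
      fix y assume "y \<in> Psi ` NF"
      then obtain s where s: "s \<in> NF" and y: "y = Psi s" by auto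
      have sO: "s \<in> proper_colorings b (Suc h) k" and nf: "\<not> frozen_root b (Suc h) k s"
        and sa: "s [] = a" using s unfolding NF_def by auto
      obtain c where c: "c \<in> {1..k}" "c \<noteq> s []"
        and no: "\<not> (\<exists>i<b. frozen_root b h k (sub b h s i) \<and> sub b h s i [] = c)"
        using frozen_Suc[OF sO] nf by blast
      have "y \<in> PiE {0..<b} (\<lambda>_. D - Fc c)"
        unfolding y Psi_def
      proof (rule PiE_I)
        fix i assume i: "i \<in> {0..<b}"
        then have i': "i < b" by simp
        show "(\<lambda>i\<in>{0..<b}. sub b h s i) i \<in> D - Fc c"
          using proper_sub[OF sO i'] no i' sa i unfolding D_def Fc_def Om_def by auto
      qed simp
      then show "y \<in> U" unfolding U_def using c sa by blast
    qed
    show "finite U" unfolding U_def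
      by (intro finite_UN_I finite_PiE) (use finOm in \<open>auto simp: D_def\<close>)
  qed
  have up2: "card U \<le> (\<Sum>c\<in>{1..k} - {a}. card (PiE {0..<b} (\<lambda>_. D - Fc c)))"
    unfolding U_def by (rule card_UN_le) simp
  have up3: "real (\<Sum>c\<in>{1..k} - {a}. card (PiE {0..<b} (\<lambda>_. D - Fc c)))
      \<le> (\<Sum>c\<in>{1..k} - {a}. (M - q0 * real R) ^ b)"
    unfolding of_nat_sum
  proof (rule sum_mono)
    fix c assume c: "c \<in> {1..k} - {a}"
    have "real (card (PiE {0..<b} (\<lambda>_. D - Fc c))) = real (card (D - Fc c)) ^ b"
      by (simp add: card_PiE)
    also have "\<dots> \<le> (M - q0 * real R) ^ b"
      by (rule power_mono) (use cardDF c in auto)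
    finally show "real (card (PiE {0..<b} (\<lambda>_. D - Fc c))) \<le> (M - q0 * real R) ^ b" .
  qed
  have cardk: "card ({1..k} - {a}) = k - 1" using a by simp
  have sumeq: "(\<Sum>c\<in>{1..k} - {a}. (M - q0 * real R) ^ b) = (real k - 1) * (M - q0 * real R) ^ b"
    using cardk k2 by (simp add: of_nat_diff)
  have key: "(real k - 1) * (M - q0 * real R) ^ b \<le> (1 - q0) * M ^ b"
  proof -
    have k1: "0 < real k - 1" using k2 by simp
    have qq: "q0 / (real k - 1) * M = q0 * real R" unfolding M using k1 by simp
    have "M - q0 * real R = (1 - q0 / (real k - 1)) * M" unfolding left_diff_distrib qq by simp
    then have "(real k - 1) * (M - q0 * real R) ^ b = ((real k - 1) * (1 - q0 / (real k - 1)) ^ b) * M ^ b"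
      by (simp add: power_mult_distrib)
    also have "\<dots> \<le> (1 - q0) * M ^ b"
      by (rule mult_right_mono[OF an]) (simp add: M_def)
    finally show ?thesis .
  qed
  have "real (card NF) \<le> (1 - q0) * M ^ b"
    using up1 up2 up3 sumeq key
    by (smt (verit, ccfv_SIG) of_nat_le_iff)
  also have "M ^ b = real (card (PiE {0..<b} (\<lambda>_. D)))" using cardPi M_def by simp
  also have "(1 - q0) * \<dots> \<le> (1 - q0) * real (card Aa')"
    using low q0 by (intro mult_left_mono) auto
  finally show ?thesis unfolding NF_def Aa'_def .
qed



lemma frozen_bound:
  fixes q0 :: real
  assumes k2: "2 \<le> k" and q0: "0 \<le> q0" "q0 \<le> 1"
    and an: "(real k - 1) * (1 - q0 / (real k - 1)) ^ b \<le> 1 - q0"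
  shows "q0 * real (card (proper_colorings b h k))
         \<le> real (card {\<tau> \<in> proper_colorings b h k. frozen_root b h k \<tau>})"
proof (induction h)
  case 0
  have "{\<tau> \<in> proper_colorings b 0 k. frozen_root b 0 k \<tau>} = proper_colorings b 0 k"
    using frozen0 by auto
  then show ?case using q0 by (simp add: mult_left_le_one_le)
next
  case (Suc h)
  define Om where "Om = proper_colorings b (Suc h) k"
  define Fr where "Fr = {\<tau> \<in> Om. frozen_root b (Suc h) k \<tau>}"
  define NF where "NF = {\<tau> \<in> Om. \<not> frozen_root b (Suc h) k \<tau>}"
  have part: "card Fr + card NF = card Om"
  proof -
    have "Om = Fr \<union> NF" "Fr \<inter> NF = {}" unfolding Fr_def NF_def by auto
    moreover have "finite Om" unfolding Om_def by (rule finite_Omega)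
    ultimately show ?thesis by (metis card_Un_disjoint finite_Un)
  qed
  have "real (card NF) = (\<Sum>a\<in>{1..k}. real (card {\<tau> \<in> Om. \<not> frozen_root b (Suc h) k \<tau> \<and> \<tau> [] = a}))"
    unfolding NF_def Om_def using card_by_root[of b "Suc h" k "\<lambda>\<tau>. \<not> frozen_root b (Suc h) k \<tau>"]
    by simp
  also have "\<dots> \<le> (\<Sum>a\<in>{1..k}. (1 - q0) * real (card {\<tau> \<in> Om. \<tau> [] = a}))"
    unfolding Om_def by (rule sum_mono, rule count_step[OF _ k2 q0 Suc an]) simp
  also have "\<dots> = (1 - q0) * real (card Om)"
    unfolding Om_def card_all_by_root[of b "Suc h" k] by (simp add: sum_distrib_left)
  finally have "real (card NF) \<le> (1 - q0) * real (card Om)" .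
  moreover have "real (card Fr) + real (card NF) = real (card Om)"
    using part by (simp flip: of_nat_add)
  moreover have "(1 - q0) * real (card Om) = real (card Om) - q0 * real (card Om)"
    by (simp add: algebra_simps)
  ultimately have "q0 * real (card Om) \<le> real (card Fr)" by linarith
  then show ?case unfolding Om_def Fr_def .
qed

lemma Omega_nonempty:
  assumes "2 \<le> k"
  shows "proper_colorings b h k \<noteq> {}"
proof -
  define \<sigma> where "\<sigma> = restrict (\<lambda>v::nat list. 1 + length v mod 2) (tree_vertices b h)"
  have "\<sigma> \<in> proper_colorings b h k"
    unfolding proper_colorings_def
  proof (intro CollectI conjI ballI)
    show "\<sigma> \<in> tree_vertices b h \<rightarrow>\<^sub>E {1..k}" unfolding \<sigma>_def using assms by auto
  next
    fix v u assume v: "v \<in> tree_vertices b h" and u: "u \<in> tree_nbrs b h v"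
    have uV: "u \<in> tree_vertices b h" using nbrs_V[OF v] u by auto
    have "length u = length v + 1 \<or> length v = length u + 1"
      using u by (auto simp: tree_nbrs_def split: if_splits)
    then have "length u mod 2 \<noteq> length v mod 2" by presburger
    then show "\<sigma> u \<noteq> \<sigma> v" unfolding \<sigma>_def using v uV by simp
  qed
  then show ?thesis by auto
qed



definition SS :: "nat \<Rightarrow> nat \<Rightarrow> nat \<Rightarrow> (nat list \<Rightarrow> nat) set" where
  "SS b h k = {\<sigma> \<in> proper_colorings b h k. frozen_root b h k \<sigma> \<and> 1 \<le> \<sigma> tree_root \<and>
                 real (\<sigma> tree_root) \<le> real k / 2}"

lemma boundary:
  assumes h: "1 \<le> h" and \<sigma>: "\<sigma> \<in> SS b h k" and v: "v \<in> tree_vertices b h"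
    and c: "c \<in> avail_colors b h k \<sigma> v"
    and \<eta>: "\<sigma>(v := c) \<in> proper_colorings b h k - SS b h k"
  shows "v \<in> tree_leaves b h \<and> event_E b h k \<sigma> v"
proof -
  have sO: "\<sigma> \<in> proper_colorings b h k" and fr: "frozen_root b h k \<sigma>"
    and r: "1 \<le> \<sigma> []" "real (\<sigma> []) \<le> real k / 2"
    using \<sigma> unfolding SS_def tree_root_def by auto
  have eO: "\<sigma>(v := c) \<in> proper_colorings b h k" and eS: "\<sigma>(v := c) \<notin> SS b h k" using \<eta> by auto
  have ck: "c \<in> {1..k}" using c by (simp add: avail_colors_def)
  have nilL: "[] \<notin> tree_leaves b h" using h by (simp add: tree_leaves_def)
  show ?thesis
  proof (cases "v = []")
    case True
    have "\<forall>z\<in>tree_leaves b h. (\<sigma>(v := c)) z = \<sigma> z" using True nilL by auto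
    then have "(\<sigma>(v := c)) [] = \<sigma> []" using fr eO unfolding frozen_root_def tree_root_def by blast
    then have "\<sigma>(v := c) = \<sigma>" using True by simp
    then show ?thesis using eS \<sigma> by simp
  next
    case False
    have root: "(\<sigma>(v := c)) [] = \<sigma> []" using False by simp
    show ?thesis
    proof (cases "v \<in> tree_leaves b h")
      case True
      have "\<not> frozen_root b h k (\<sigma>(v := c))"
        using eS eO root r unfolding SS_def tree_root_def by auto
      then show ?thesis using True fr eO ck unfolding event_E_def by blast
    next
      case notL: False
      have "frozen_root b h k (\<sigma>(v := c))"
        unfolding frozen_root_def tree_root_def
      proof (intro ballI impI)
        fix \<tau> assume \<tau>: "\<tau> \<in> proper_colorings b h k"
          and ag: "\<forall>z\<in>tree_leaves b h. \<tau> z = (\<sigma>(v := c)) z"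
        have "\<forall>z\<in>tree_leaves b h. \<tau> z = \<sigma> z" using ag notL by auto
        then have "\<tau> [] = \<sigma> []" using fr \<tau> unfolding frozen_root_def tree_root_def by blast
        then show "\<tau> [] = (\<sigma>(v := c)) []" using root by simp
      qed
      then have "\<sigma>(v := c) \<in> SS b h k" using eO root r unfolding SS_def tree_root_def by auto
      then show ?thesis using eS by simp
    qed
  qed
qed

lemma finite_avail: "finite (avail_colors b h k \<sigma> v)"
  unfolding avail_colors_def by simp

lemma inner_bound:
  assumes h: "1 \<le> h" and \<sigma>: "\<sigma> \<in> SS b h k"
  shows "(\<Sum>\<eta>\<in>proper_colorings b h k - SS b h k. glauber_P b h k \<sigma> \<eta>)
    \<le> 1 / real (card (tree_vertices b h)) *
       (\<Sum>z\<in>tree_leaves b h. if event_E b h k \<sigma> z then 1 else 0)"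
proof -
  define V where "V = tree_vertices b h"
  define A where "A = avail_colors b h k \<sigma>"
  define T where "T = proper_colorings b h k - SS b h k"
  have finT: "finite T" unfolding T_def using finite_Omega by simp
  have "(\<Sum>\<eta>\<in>T. glauber_P b h k \<sigma> \<eta>)
     = 1 / real (card V) * (\<Sum>\<eta>\<in>T. \<Sum>v\<in>V. \<Sum>c\<in>A v.
          (if \<eta> = \<sigma>(v := c) then 1 / real (card (A v)) else 0))"
    unfolding glauber_P_def V_def A_def by (simp add: sum_distrib_left)
  also have "(\<Sum>\<eta>\<in>T. \<Sum>v\<in>V. \<Sum>c\<in>A v. (if \<eta> = \<sigma>(v := c) then 1 / real (card (A v)) else 0))
     = (\<Sum>v\<in>V. \<Sum>c\<in>A v. \<Sum>\<eta>\<in>T. (if \<eta> = \<sigma>(v := c) then 1 / real (card (A v)) else 0))"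
    by (subst sum.swap) (simp add: sum.swap[of _ T])
  also have "\<dots> = (\<Sum>v\<in>V. \<Sum>c\<in>A v. (if \<sigma>(v := c) \<in> T then 1 / real (card (A v)) else 0))"
    using finT by (simp add: sum.delta')
  also have "\<dots> \<le> (\<Sum>v\<in>V. if v \<in> tree_leaves b h then (if event_E b h k \<sigma> v then 1 else 0) else 0)"
  proof (rule sum_mono)
    fix v assume v: "v \<in> V"
    show "(\<Sum>c\<in>A v. (if \<sigma>(v := c) \<in> T then 1 / real (card (A v)) else 0))
        \<le> (if v \<in> tree_leaves b h then (if event_E b h k \<sigma> v then 1 else 0) else 0)"
    proof (cases "v \<in> tree_leaves b h \<and> event_E b h k \<sigma> v")
      case True
      have "(\<Sum>c\<in>A v. (if \<sigma>(v := c) \<in> T then 1 / real (card (A v)) else 0))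
          \<le> (\<Sum>c\<in>A v. 1 / real (card (A v)))" by (rule sum_mono) auto
      also have "\<dots> \<le> 1" by (cases "card (A v) = 0") auto
      finally show ?thesis using True by simp
    next
      case False
      have "(\<Sum>c\<in>A v. (if \<sigma>(v := c) \<in> T then 1 / real (card (A v)) else 0)) = 0"
      proof (rule sum.neutral, rule ballI)
        fix c assume "c \<in> A v"
        then have "\<sigma>(v := c) \<notin> T" using boundary[OF h \<sigma>, of v c] v False
          unfolding A_def V_def T_def by blast
        then show "(if \<sigma>(v := c) \<in> T then 1 / real (card (A v)) else 0) = 0" by simp
      qed
      then show ?thesis by simp
    qed
  qed
  also have "\<dots> = (\<Sum>z\<in>tree_leaves b h. if event_E b h k \<sigma> z then 1 else 0)"
  proof -
    have "V \<inter> tree_leaves b h = tree_leaves b h" unfolding V_def using L_V by auto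
    then show ?thesis using sum.inter_restrict[of V "\<lambda>z. if event_E b h k \<sigma> z then (1::real) else 0" "tree_leaves b h"]
      finite_V[of b h] unfolding V_def by simp
  qed
  finally show ?thesis unfolding T_def V_def
    by (simp add: divide_right_mono)
qed



lemma SS_sub: "SS b h k \<subseteq> proper_colorings b h k" unfolding SS_def by auto

lemma num_bound:
  assumes h: "1 \<le> h"
  shows "(\<Sum>\<sigma>\<in>SS b h k. \<Sum>\<eta>\<in>proper_colorings b h k - SS b h k.
            unif_pi b h k {\<sigma>} * glauber_P b h k \<sigma> \<eta>)
    \<le> 1 / real (card (tree_vertices b h)) * (\<Sum>z\<in>tree_leaves b h. \<Sum>\<sigma>\<in>proper_colorings b h k.
            (if event_E b h k \<sigma> z then 1 else 0) / real (card (proper_colorings b h k)))"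
proof -
  define N where "N = real (card (proper_colorings b h k))"
  define n where "n = real (card (tree_vertices b h))"
  define X where "X = (\<lambda>\<sigma>. \<Sum>z\<in>tree_leaves b h. if event_E b h k \<sigma> z then 1 else (0::real))"
  have Xnn: "0 \<le> X \<sigma>" for \<sigma> unfolding X_def by (rule sum_nonneg) auto
  have "(\<Sum>\<sigma>\<in>SS b h k. \<Sum>\<eta>\<in>proper_colorings b h k - SS b h k.
            unif_pi b h k {\<sigma>} * glauber_P b h k \<sigma> \<eta>)
      = (\<Sum>\<sigma>\<in>SS b h k. unif_pi b h k {\<sigma>} * (\<Sum>\<eta>\<in>proper_colorings b h k - SS b h k. glauber_P b h k \<sigma> \<eta>))"
    by (simp add: sum_distrib_left)
  also have "\<dots> \<le> (\<Sum>\<sigma>\<in>SS b h k. 1 / N * (1 / n * X \<sigma>))"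
  proof (rule sum_mono)
    fix \<sigma> assume \<sigma>: "\<sigma> \<in> SS b h k"
    have "\<sigma> \<in> proper_colorings b h k" using \<sigma> SS_sub by auto
    then have "{\<sigma>} \<inter> proper_colorings b h k = {\<sigma>}" by auto
    then have u: "unif_pi b h k {\<sigma>} = 1 / N" unfolding unif_pi_def N_def by simp
    show "unif_pi b h k {\<sigma>} * (\<Sum>\<eta>\<in>proper_colorings b h k - SS b h k. glauber_P b h k \<sigma> \<eta>)
        \<le> 1 / N * (1 / n * X \<sigma>)"
      unfolding u X_def n_def
      by (rule mult_left_mono[OF inner_bound[OF h \<sigma>]]) (simp add: N_def)
  qed
  also have "\<dots> \<le> (\<Sum>\<sigma>\<in>proper_colorings b h k. 1 / N * (1 / n * X \<sigma>))"
    by (rule sum_mono2[OF finite_Omega SS_sub]) (simp add: Xnn N_def n_def)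
  also have "\<dots> = 1 / n * (\<Sum>z\<in>tree_leaves b h. \<Sum>\<sigma>\<in>proper_colorings b h k.
            (if event_E b h k \<sigma> z then 1 else 0) / N)"
    unfolding X_def
    by (simp add: sum_distrib_left sum_divide_distrib sum.swap[of _ "tree_leaves b h"] algebra_simps)
  finally show ?thesis unfolding N_def n_def .
qed

lemma SS_card:
  assumes k9: "9 \<le> k" and Npos: "0 < card (proper_colorings b h k)"
    and fb: "3 / 4 * real (card (proper_colorings b h k))
         \<le> real (card {\<tau> \<in> proper_colorings b h k. frozen_root b h k \<tau>})"
  shows "1 / 3 \<le> real (card (SS b h k)) / real (card (proper_colorings b h k))"
        "real (card (SS b h k)) / real (card (proper_colorings b h k)) \<le> 1 / 2"
proof -
  define Om where "Om = proper_colorings b h k"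
  define Fc where "Fc = (\<lambda>c. {\<tau> \<in> Om. frozen_root b h k \<tau> \<and> \<tau> [] = c})"
  define G where "G = card (Fc 1)"
  have k1: "(1::nat) \<in> {1..k}" using k9 by simp
  have FcG: "card (Fc c) = G" if "c \<in> {1..k}" for c
    unfolding Fc_def G_def Om_def by (rule sym_card_frozen[OF that k1])
  have F: "card {\<tau> \<in> Om. frozen_root b h k \<tau>} = k * G"
    unfolding Om_def G_def Fc_def by (rule card_frozen_eq[OF k1])
  have SSU: "SS b h k = (\<Union>c\<in>{1..k div 2}. Fc c)"
  proof (rule set_eqI, rule iffI)
    fix x assume "x \<in> SS b h k"
    then have x: "x \<in> Om" "frozen_root b h k x" "1 \<le> x []" "real (x []) \<le> real k / 2"
      unfolding SS_def Om_def tree_root_def by auto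
    then have "x [] \<le> k div 2" by linarith
    then show "x \<in> (\<Union>c\<in>{1..k div 2}. Fc c)" using x unfolding Fc_def by auto
  next
    fix x assume "x \<in> (\<Union>c\<in>{1..k div 2}. Fc c)"
    then obtain c where c: "c \<in> {1..k div 2}" "x \<in> Fc c" by auto
    then have "real (x []) \<le> real k / 2" unfolding Fc_def by auto
    then show "x \<in> SS b h k" using c unfolding Fc_def SS_def Om_def tree_root_def by auto
  qed
  have cS: "card (SS b h k) = (k div 2) * G"
  proof -
    have "card (\<Union>c\<in>{1..k div 2}. Fc c) = (\<Sum>c\<in>{1..k div 2}. card (Fc c))"
      apply (rule card_UN_disjoint)
        apply simp
       apply (simp add: Fc_def Om_def finite_Omega)
      apply (auto simp: Fc_def)
      done
    also have "\<dots> = (\<Sum>c\<in>{1..k div 2}. G)" by (rule sum.cong) (auto intro!: FcG)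
    finally show ?thesis using SSU by simp
  qed
  have FN: "k * G \<le> card Om"
    using F card_mono[OF finite_Omega, of "{\<tau> \<in> Om. frozen_root b h k \<tau>}" b h k] unfolding Om_def by auto
  define N where "N = real (card Om)"
  have Np: "0 < N" using Npos unfolding N_def Om_def by simp
  have fb': "3 / 4 * N \<le> real k * real G" using fb F unfolding N_def Om_def by (metis of_nat_mult)
  have FN': "real k * real G \<le> N" using FN unfolding N_def by (metis of_nat_le_iff of_nat_mult)
  have d1: "4 / 9 * real k \<le> real (k div 2)" using k9 by linarith
  have d2: "real (k div 2) \<le> real k / 2" by linarith
  have Gnn: "0 \<le> real G" by simp
  have "1 / 3 * N \<le> real (k div 2) * real G"
  proof -
    have "1 / 3 * N \<le> 4 / 9 * (real k * real G)" using fb' by linarith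
    also have "\<dots> = (4 / 9 * real k) * real G" by simp
    also have "\<dots> \<le> real (k div 2) * real G" by (rule mult_right_mono[OF d1 Gnn])
    finally show ?thesis .
  qed
  then show "1 / 3 \<le> real (card (SS b h k)) / real (card (proper_colorings b h k))"
    using Np cS unfolding N_def Om_def by (simp add: le_divide_eq)
  have "real (k div 2) * real G \<le> real k / 2 * real G" by (rule mult_right_mono[OF d2 Gnn])
  then have "real (k div 2) * real G \<le> 1 / 2 * N" using FN' by linarith
  then show "real (card (SS b h k)) / real (card (proper_colorings b h k)) \<le> 1 / 2"
    using Np cS unfolding N_def Om_def by (simp add: divide_le_eq)
qed

lemma main_fixed:
  fixes q0 :: real
  assumes h: "1 \<le> h" and k9: "9 \<le> k" and q0: "3 / 4 \<le> q0" "q0 \<le> 1"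
    and an: "(real k - 1) * (1 - q0 / (real k - 1)) ^ b \<le> 1 - q0"
  shows "conductance b h k (SS b h k) \<le>
        6 / real (card (tree_vertices b h)) * (\<Sum>z \<in> tree_leaves b h. \<Sum>\<sigma> \<in> proper_colorings b h k.
            (if event_E b h k \<sigma> z then 1 else 0) / real (card (proper_colorings b h k)))"
proof -
  define N where "N = real (card (proper_colorings b h k))"
  define n where "n = real (card (tree_vertices b h))"
  define Y where "Y = (\<Sum>z \<in> tree_leaves b h. \<Sum>\<sigma> \<in> proper_colorings b h k.
            (if event_E b h k \<sigma> z then 1 else 0) / N)"
  define s where "s = real (card (SS b h k)) / N"
  have k2: "2 \<le> k" using k9 by simp
  have Npos: "0 < card (proper_colorings b h k)"
    using Omega_nonempty[OF k2] finite_Omega by (simp add: card_gt_0_iff)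
  have fb: "q0 * real (card (proper_colorings b h k))
         \<le> real (card {\<tau> \<in> proper_colorings b h k. frozen_root b h k \<tau>})"
    by (rule frozen_bound[OF k2 _ q0(2) an]) (use q0 in simp)
  have fb': "3 / 4 * real (card (proper_colorings b h k))
         \<le> real (card {\<tau> \<in> proper_colorings b h k. frozen_root b h k \<tau>})"
    using fb q0 by (meson dual_order.trans mult_right_mono of_nat_0_le_iff)
  note sc = SS_card[OF k9 Npos fb']
  have s1: "1 / 3 \<le> s" "s \<le> 1 / 2" using sc unfolding s_def N_def by auto
  have pS: "unif_pi b h k (SS b h k) = s"
    unfolding unif_pi_def s_def N_def using SS_sub by (simp add: Int_absorb2)
  have pC: "unif_pi b h k (proper_colorings b h k - SS b h k) = 1 - s"
  proof -
    have "card ((proper_colorings b h k - SS b h k) \<inter> proper_colorings b h k)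
          = card (proper_colorings b h k) - card (SS b h k)"
      using card_Diff_subset[OF finite_subset[OF SS_sub finite_Omega] SS_sub] by (simp add: Int_absorb2)
    moreover have "card (SS b h k) \<le> card (proper_colorings b h k)"
      by (rule card_mono[OF finite_Omega SS_sub])
    ultimately show ?thesis unfolding unif_pi_def s_def N_def using Npos
      by (simp add: of_nat_diff diff_divide_distrib)
  qed
  have den: "1 / 6 \<le> s * (1 - s)"
  proof -
    have "0 \<le> (s - 1 / 3) * (2 / 3 - s)" using s1 by (intro mult_nonneg_nonneg) auto
    moreover have "(s - 1 / 3) * (2 / 3 - s) = s * (1 - s) - 2 / 9" by (simp add: field_simps)
    ultimately show ?thesis by linarith
  qed
  have Ynn: "0 \<le> Y" unfolding Y_def N_def by (intro sum_nonneg) auto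
  have num: "(\<Sum>\<sigma>\<in>SS b h k. \<Sum>\<eta>\<in>proper_colorings b h k - SS b h k.
            unif_pi b h k {\<sigma>} * glauber_P b h k \<sigma> \<eta>) \<le> 1 / n * Y"
    using num_bound[OF h] unfolding Y_def n_def N_def .
  have nY: "0 \<le> 1 / n * Y" using Ynn unfolding n_def by simp
  have "conductance b h k (SS b h k) \<le> (1 / n * Y) / (s * (1 - s))"
    unfolding conductance_def pS pC
    by (rule divide_right_mono[OF num]) (use den in linarith)
  also have "\<dots> \<le> (1 / n * Y) / (1 / 6)"
    by (rule divide_left_mono[OF den nY]) (use den in auto)
  also have "\<dots> = 6 / n * Y" by simp
  finally show ?thesis unfolding n_def Y_def N_def .
qed


theorem lemma8:
  fixes C :: real
  assumes "0 < C" and "C < 1"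
  shows "\<exists>b0::nat. \<forall>b \<ge> b0. \<forall>h::nat. h \<ge> 1 \<longrightarrow>
    (let \<epsilon> = 1 / C - 1;
         k = nat \<lfloor>real b / ((1 + \<epsilon>) * ln (real b))\<rfloor>;
         \<Omega> = proper_colorings b h k;
         n = card (tree_vertices b h);
         S = {\<sigma> \<in> \<Omega>. frozen_root b h k \<sigma> \<and> 1 \<le> \<sigma> tree_root \<and> real (\<sigma> tree_root) \<le> real k / 2}
     in conductance b h k S \<le>
        6 / real n * (\<Sum>z \<in> tree_leaves b h. \<Sum>\<sigma> \<in> \<Omega>.
            (if event_E b h k \<sigma> z then 1 else 0) / real (card \<Omega>)))"
proof -
  define q0 where "q0 = (3 + C) / 4"
  obtain b0 :: nat where b0: "\<And>b. b \<ge> b0 \<Longrightarrow> 3 \<le> real b \<and> 10 \<le> C * real b / ln (real b)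
     \<and> real b powr (1 - ((3 + C) / 4) / C) \<le> 1 - (3 + C) / 4"
    using analytic[OF assms] by blast
  show ?thesis
  proof (intro exI allI impI)
    fix b h :: nat assume b: "b0 \<le> b" and h: "1 \<le> h"
    define k where "k = nat \<lfloor>real b / ((1 + (1 / C - 1)) * ln (real b))\<rfloor>"
    have eq: "real b / ((1 + (1 / C - 1)) * ln (real b)) = C * real b / ln (real b)"
      using assms by (simp add: field_simps)
    have B: "3 \<le> real b" "10 \<le> C * real b / ln (real b)"
      "real b powr (1 - q0 / C) \<le> 1 - q0"
      using b0[OF b] unfolding q0_def by auto
    have kf: "k = nat \<lfloor>C * real b / ln (real b)\<rfloor>" unfolding k_def eq ..
    have fl: "10 \<le> \<lfloor>C * real b / ln (real b)\<rfloor>" using B(2) by linarith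
    have rk: "real k = of_int \<lfloor>C * real b / ln (real b)\<rfloor>" unfolding kf using fl by simp
    have k9: "9 \<le> k" using fl unfolding kf by linarith
    have K9: "9 \<le> real k" using k9 by simp
    have KC: "real k \<le> C * real b / ln (real b)" unfolding rk by (rule of_int_floor_le)
    have an: "(real k - 1) * (1 - q0 / (real k - 1)) ^ b \<le> 1 - q0"
      by (rule pointwise[OF assms q0_def B(1) K9 KC B(3)])
    have q0b: "3 / 4 \<le> q0" "q0 \<le> 1" unfolding q0_def using assms by auto
    have M: "conductance b h k (SS b h k) \<le>
        6 / real (card (tree_vertices b h)) * (\<Sum>z \<in> tree_leaves b h. \<Sum>\<sigma> \<in> proper_colorings b h k.
            (if event_E b h k \<sigma> z then 1 else 0) / real (card (proper_colorings b h k)))"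
      by (rule main_fixed[OF h k9 q0b an])
    show "let \<epsilon> = 1 / C - 1;
         k = nat \<lfloor>real b / ((1 + \<epsilon>) * ln (real b))\<rfloor>;
         \<Omega> = proper_colorings b h k;
         n = card (tree_vertices b h);
         S = {\<sigma> \<in> \<Omega>. frozen_root b h k \<sigma> \<and> 1 \<le> \<sigma> tree_root \<and> real (\<sigma> tree_root) \<le> real k / 2}
     in conductance b h k S \<le>
        6 / real n * (\<Sum>z \<in> tree_leaves b h. \<Sum>\<sigma> \<in> \<Omega>.
            (if event_E b h k \<sigma> z then 1 else 0) / real (card \<Omega>))"
      unfolding Let_def k_def[symmetric] using M unfolding SS_def .
  qed
qed

end
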